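(* Let $\Omega\subset\mathbb{R}^2$ be a bounded open set, and let the kernels $\gamma_\delta$, polygons, $\underline{r}(n_\delta)$, $\gamma_{\delta,n_\delta}$ and the norms be as in the context. Assume that $$\lim_{\delta\to0}\int_{\|\mathbf{y}-\mathbf{x}\|_2\le\underline{r}(n_\delta)}|y_i-x_i|^2\,\gamma_\delta(\mathbf{x},\mathbf{y})\,d\mathbf{y}=1,\qquad i=1,2.$$ Then there exist $\delta_0>0$ and $C>0$ independent of $\delta$ such that for all $\delta<\delta_0$ and all $u\in V(\widehat{\Omega}_\delta)$, $$\|u\|_{L^2(\Omega)}\le C\|u\|_{\underline{r}(n_\delta)},$$ and consequently $$\|u\|_{L^2(\Omega)}\le C\|u\|_{\delta,n_\delta}.$$
   Context: $B_\delta(\mathbf{x})=\{\mathbf{y}:\|\mathbf{y}-\mathbf{x}\|_2\le\delta\}$; $\Omega^c_\delta=\{\mathbf{y}\in\mathbb{R}^2\setminus\Omega:\operatorname{dist}(\mathbf{y},\partial\Omega)<\delta\}$; $\widehat{\Omega}_\delta=\Omega\cup\Omega^c_\delta$. Each kernel is $\gamma_\delta(\mathbf{x},\mathbf{y})=\widetilde{\gamma}_\delta(\|\mathbf{y}-\mathbf{x}\|_2)$ with $\widetilde{\gamma}_\delta\ge0$, $\widetilde{\gamma}_\delta(t)>0$ for $0\le t<\delta$, $\widetilde{\gamma}_\delta(t)=0$ for $t>\delta$, and $\int_{B_\delta(\mathbf{0})}z_i^2\widetilde{\gamma}_\delta(\|\mathbf{z}\|_2)d\mathbf{z}=1$, $i=1,2$.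 For each $\delta$ and each point $\mathbf{x}$ a polygon $B_{\delta,n_{\delta,\mathbf{x}}}(\mathbf{x})\subset B_\delta(\mathbf{x})$ is given; $r_{\delta,\mathbf{x}}$ is the radius of the largest ball centered at $\mathbf{x}$ contained in it and $\underline{r}(n_\delta)=\inf_{\mathbf{x}\in\Omega}r_{\delta,\mathbf{x}}$. $\gamma_{\delta,n_{\delta,\mathbf{x}}}(\mathbf{x},\mathbf{y})=\gamma_\delta(\mathbf{x},\mathbf{y})\mathbf{1}[\mathbf{y}\in B_{\delta,n_{\delta,\mathbf{x}}}(\mathbf{x})]$, $\gamma_{\delta,n_\delta}(\mathbf{x},\mathbf{y})=\tfrac12(\gamma_{\delta,n_{\delta,\mathbf{x}}}(\mathbf{x},\mathbf{y})+\gamma_{\delta,n_{\delta,\mathbf{y}}}(\mathbf{y},\mathbf{x}))$. Norms: $\|u\|_\delta^2=\int_{\widehat{\Omega}_\delta}\int_{\widehat{\Omega}_\delta}(u(\mathbf{y})-u(\mathbf{x}))^2\gamma_\delta\,d\mathbf{y}d\mathbf{x}$, $\|u\|_{\delta,n_\delta}^2$ the same with $\gamma_{\delta,n_\delta}$ in place of $\gamma_\delta$, and $\|u\|_{\underline{r}(n_\delta)}^2$ the same with $\gamma_\delta(\mathbf{x},\mathbf{y})\chi_{\underline{r}(n_\delta)}(\|\mathbf{y}-\mathbf{x}\|_2)$, where $\chi_r$ is the indicator of $[0,r]$. $V(\widehat{\Omega}_\delta)=\{u\in L^2(\widehat{\Omega}_\delta):\|u\|_\delta<\infty,\ u=0\text{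 on }\Omega^c_\delta\}$. *)

theory Defs
  imports "HOL-Analysis.Analysis"
begin

type_synonym pt = "real ^ 2"

definition polygon :: "pt set \<Rightarrow> bool" where
  "polygon P \<longleftrightarrow> (\<exists>T. finite T \<and> (\<forall>S\<in>T. finite S) \<and> P = \<Union> ((\<lambda>S. convex hull S) ` T))"

definition Omega_c :: "pt set \<Rightarrow> real \<Rightarrow> pt set" where
  "Omega_c \<Omega> \<delta> = {y. y \<notin> \<Omega> \<and> infdist y (frontier \<Omega>) < \<delta>}"

definition Omega_hat :: "pt set \<Rightarrow> real \<Rightarrow> pt set" where
  "Omega_hat \<Omega> \<delta> = \<Omega> \<union> Omega_c \<Omega> \<delta>"

definition kern :: "(real \<Rightarrow> real \<Rightarrow> real) \<Rightarrow> real \<Rightarrow> pt \<Rightarrow> pt \<Rightarrow> real" where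
  "kern g \<delta> x y = g \<delta> (norm (y - x))"

definition inball_radius :: "pt set \<Rightarrow> pt \<Rightarrow> real" where
  "inball_radius P x = Sup ({0} \<union> {r. 0 \<le> r \<and> cball x r \<subseteq> P})"

definition r_low :: "pt set \<Rightarrow> (real \<Rightarrow> pt \<Rightarrow> pt set) \<Rightarrow> real \<Rightarrow> real" where
  "r_low \<Omega> P \<delta> = Inf ((\<lambda>x. inball_radius (P \<delta> x) x) ` \<Omega>)"

definition kern_poly :: "(real \<Rightarrow> real \<Rightarrow> real) \<Rightarrow> (real \<Rightarrow> pt \<Rightarrow> pt set) \<Rightarrow> real \<Rightarrow> pt \<Rightarrow> pt \<Rightarrow> real" where
  "kern_poly g P \<delta> x y =
     (kern g \<delta> x y * indicator (P \<delta> x) y + kern g \<delta> y x * indicator (P \<delta> y) x) / 2"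

definition kern_trunc :: "(real \<Rightarrow> real \<Rightarrow> real) \<Rightarrow> real \<Rightarrow> real \<Rightarrow> pt \<Rightarrow> pt \<Rightarrow> real" where
  "kern_trunc g \<delta> r x y = kern g \<delta> x y * indicator {0..r} (norm (y - x))"

definition nl_norm_sq :: "(pt \<Rightarrow> pt \<Rightarrow> real) \<Rightarrow> pt set \<Rightarrow> (pt \<Rightarrow> real) \<Rightarrow> ennreal" where
  "nl_norm_sq K A u =
     (\<integral>\<^sup>+ x\<in>A. (\<integral>\<^sup>+ y\<in>A. ennreal ((u y - u x)^2 * K x y) \<partial>lebesgue) \<partial>lebesgue)"

definition L2_norm_sq :: "pt set \<Rightarrow> (pt \<Rightarrow> real) \<Rightarrow> ennreal" where
  "L2_norm_sq A u = (\<integral>\<^sup>+ x\<in>A. ennreal ((u x)^2) \<partial>lebesgue)"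

definition Vspace :: "pt set \<Rightarrow> (real \<Rightarrow> real \<Rightarrow> real) \<Rightarrow> real \<Rightarrow> (pt \<Rightarrow> real) set" where
  "Vspace \<Omega> g \<delta> = {u. set_borel_measurable lebesgue (Omega_hat \<Omega> \<delta>) u
      \<and> L2_norm_sq (Omega_hat \<Omega> \<delta>) u < \<infinity>
      \<and> nl_norm_sq (kern g \<delta>) (Omega_hat \<Omega> \<delta>) u < \<infinity>
      \<and> (\<forall>x\<in>Omega_c \<Omega> \<delta>. u x = 0)}"

end

theory Submission
  imports Defs
begin


lemma nn_translate:
  fixes f :: "pt \<Rightarrow> ennreal"
  assumes [measurable]: "f \<in> borel_measurable borel"
  shows "(\<integral>\<^sup>+ x. f (c + x) \<partial>lborel) = (\<integral>\<^sup>+ x. f x \<partial>lborel)"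
proof -
  have "(\<integral>\<^sup>+ x. f x \<partial>lborel) = (\<integral>\<^sup>+ x. f x \<partial>(distr lborel borel ((+) c)))"
    by (simp add: lborel_distr_plus)
  also have "\<dots> = (\<integral>\<^sup>+ x. f (c + x) \<partial>lborel)"
    by (subst nn_integral_distr) auto
  finally show ?thesis by simp
qed

lemma AE_translate:
  fixes c :: pt
  assumes "AE y in lborel. P y"
  shows "AE h in lborel. P (c + h)"
proof -
  from assms obtain N where N: "N \<in> null_sets lborel" "{y\<in>space lborel. \<not> P y} \<subseteq> N"
    by (metis AE_E null_setsI)
  have m: "N \<in> sets borel" using N by auto
  have "emeasure lborel ((+) c -` N) = emeasure (distr lborel borel ((+) c)) N"
    using m by (subst emeasure_distr) auto
  also have "\<dots> = 0" using N by (simp add: lborel_distr_plus null_setsD1)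
  moreover have mc: "((+) c) \<in> borel \<rightarrow>\<^sub>M (borel::pt measure)" by measurable
  have "(+) c -` N \<in> sets borel" using measurable_sets[OF mc m] by simp
  ultimately have "(+) c -` N \<in> null_sets lborel"
    by (auto simp: null_sets_def)
  then show ?thesis
    by (rule AE_I') (use N in auto)
qed

lemma AE_comp1_nz: "AE h in lborel. (h::pt) $ 1 \<noteq> 0"
proof -
  have "negligible {h::pt. axis 1 1 \<bullet> h = 0}"
    by (rule negligible_hyperplane) (simp add: axis_eq_0_iff)
  then have "{h::pt. axis 1 1 \<bullet> h = 0} \<in> null_sets lebesgue"
    by (simp add: negligible_iff_null_sets)
  then have "{h::pt. h $ 1 = 0} \<in> null_sets lborel"
    by (subst null_sets_completion_iff[symmetric]) (auto simp: inner_axis')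
  then show ?thesis
    by (rule AE_I') auto
qed

lemma strict_dist:
  assumes "open \<Omega>" "x \<in> \<Omega>" "y \<notin> Omega_hat \<Omega> \<delta>"
  shows "\<delta> < norm (y - x)"
proof -
  have yn: "y \<notin> \<Omega>" and inf: "\<delta> \<le> infdist y (frontier \<Omega>)"
    using assms(3) by (auto simp: Omega_hat_def Omega_c_def)
  have "closed_segment x y \<inter> frontier \<Omega> \<noteq> {}"
    by (rule connected_Int_frontier) (use assms yn in auto)
  then obtain p where p: "p \<in> closed_segment x y" "p \<in> frontier \<Omega>" by auto
  have "p \<notin> \<Omega>" using p(2) assms(1) by (simp add: frontier_def interior_open)
  then have "p \<noteq> x" using assms(2) by auto
  then have a: "0 < norm (p - x)" by simp
  have b: "\<delta> \<le> norm (y - p)" using infdist_le[OF p(2), of y] inf by (simp add: dist_norm)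
  have "norm (y - x) = norm (p - x) + norm (y - p)"
    using p(1) by (simp add: between_mem_segment[symmetric] between dist_norm norm_minus_commute)
  then show ?thesis using a b by linarith
qed


lemma polygon_closed: "polygon P \<Longrightarrow> closed P"
  unfolding polygon_def
  by (auto intro!: closed_Union compact_imp_closed finite_imp_compact_convex_hull)

lemma inball_nonneg:
  assumes "P \<subseteq> cball x d"
  shows "0 \<le> inball_radius P x" and "bdd_above ({0} \<union> {r. 0 \<le> r \<and> cball x r \<subseteq> P})"
proof -
  show b: "bdd_above ({0} \<union> {r. 0 \<le> r \<and> cball x r \<subseteq> P})"
  proof (rule bdd_aboveI)
    fix r assume "r \<in> {0} \<union> {r. 0 \<le> r \<and> cball x r \<subseteq> P}"
    then show "r \<le> max 0 d"
    proof
      assume "r \<in> {r. 0 \<le> r \<and> cball x r \<subseteq> P}"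
      then have "cball x r \<subseteq> cball x d" "0 \<le> r" using assms by auto
      then show ?thesis by (auto simp: cball_subset_cball_iff)
    qed simp
  qed
  show "0 \<le> inball_radius P x"
    unfolding inball_radius_def by (rule cSup_upper[OF _ b]) simp
qed

lemma inball_sub:
  assumes "P \<subseteq> cball x d" "closed P" "0 < norm (y - x)" "norm (y - x) \<le> inball_radius P x"
  shows "y \<in> P"
proof -
  let ?R = "{0} \<union> {r. 0 \<le> r \<and> cball x r \<subseteq> P}"
  let ?\<rho> = "inball_radius P x"
  have b: "bdd_above ?R" using inball_nonneg[OF assms(1)] by blast
  have "ball x ?\<rho> \<subseteq> P"
  proof
    fix z assume "z \<in> ball x ?\<rho>"
    then have "dist x z < Sup ?R" by (simp add: inball_radius_def)
    then obtain r where r: "r \<in> ?R" "dist x z < r"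
      using less_cSup_iff[OF _ b] by blast
    then have "r \<noteq> 0" by (metis dist_not_less_zero)
    with r show "z \<in> P" by auto
  qed
  then have "closure (ball x ?\<rho>) \<subseteq> P" using assms(2) by (simp add: closure_minimal)
  moreover have "0 < ?\<rho>" using assms(3,4) by linarith
  ultimately have "cball x ?\<rho> \<subseteq> P" by simp
  then show ?thesis using assms(4) by (auto simp: dist_norm norm_minus_commute)
qed

lemma r_low_le:
  assumes "\<And>x. x \<in> \<Omega> \<Longrightarrow> P \<delta> x \<subseteq> cball x \<delta>" "x \<in> \<Omega>"
  shows "r_low \<Omega> P \<delta> \<le> inball_radius (P \<delta> x) x"
  unfolding r_low_def
proof (rule cInf_lower)
  show "inball_radius (P \<delta> x) x \<in> (\<lambda>x. inball_radius (P \<delta> x) x) ` \<Omega>" using assms(2) by simp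
  show "bdd_below ((\<lambda>x. inball_radius (P \<delta> x) x) ` \<Omega>)"
    by (rule bdd_belowI[where m=0]) (auto intro: inball_nonneg(1)[OF assms(1)])
qed


definition Dfun :: "(pt \<Rightarrow> real) \<Rightarrow> pt \<Rightarrow> ennreal" where
  "Dfun w h = (\<integral>\<^sup>+ x. ennreal ((w (x + h) - w x)^2) \<partial>lborel)"

lemma D_double:
  assumes [measurable]: "w \<in> borel_measurable borel"
  shows "Dfun w (h + h) \<le> 4 * Dfun w h"
proof -
  let ?f = "\<lambda>x. ennreal ((w (x + h) - w x)^2)"
  have "Dfun w (h + h) \<le> (\<integral>\<^sup>+ x. 2 * ?f (h + x) + 2 * ?f x \<partial>lborel)"
    unfolding Dfun_def
  proof (rule nn_integral_mono)
    fix x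
    define A where "A = (w (x + (h + h)) - w x)^2"
    define B where "B = (w (h + x + h) - w (h + x))^2"
    define C where "C = (w (x + h) - w x)^2"
    have e: "x + (h + h) = (h + x) + h" "h + x = x + h" by (simp_all add: algebra_simps)
    have "A \<le> 2 * B + 2 * C"
      unfolding A_def B_def C_def unfolding e(1) unfolding e(2)
      by (smt (verit) sum_squares_bound zero_le_power2 power2_diff power2_sum)
    then have "ennreal A \<le> ennreal (2 * B + 2 * C)" by (rule ennreal_leI)
    also have "\<dots> = 2 * ennreal B + 2 * ennreal C"
      by (simp add: B_def C_def ennreal_plus ennreal_mult)
    finally show "ennreal ((w (x + (h + h)) - w x)^2) \<le> 2 * ?f (h + x) + 2 * ?f x"
      unfolding A_def B_def C_def by (simp add: add.assoc)
  qed
  also have "\<dots> = 2 * (\<integral>\<^sup>+ x. ?f (h + x) \<partial>lborel) + 2 * (\<integral>\<^sup>+ x. ?f x \<partial>lborel)"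
    by (simp add: nn_integral_add nn_integral_cmult)
  also have "(\<integral>\<^sup>+ x. ?f (h + x) \<partial>lborel) = (\<integral>\<^sup>+ x. ?f x \<partial>lborel)"
    by (rule nn_translate) simp
  finally show ?thesis unfolding Dfun_def
    by (metis (no_types, lifting) distrib_right mult_2_right numeral_Bit0 one_add_one)
qed

lemma D_pow:
  assumes [measurable]: "w \<in> borel_measurable borel"
  shows "Dfun w ((2::real)^k *\<^sub>R h) \<le> 4^k * Dfun w h"
proof (induction k)
  case 0 then show ?case by simp
next
  case (Suc k)
  have "Dfun w ((2::real)^Suc k *\<^sub>R h) = Dfun w ((2::real)^k *\<^sub>R h + (2::real)^k *\<^sub>R h)"
    by (simp add: scaleR_add_left[symmetric])
  also have "\<dots> \<le> 4 * Dfun w ((2::real)^k *\<^sub>R h)" by (rule D_double[OF assms])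
  also have "\<dots> \<le> 4 * (4^k * Dfun w h)" by (rule mult_left_mono[OF Suc]) simp
  finally show ?case by (simp add: mult.assoc)
qed

lemma D_far:
  assumes [measurable]: "w \<in> borel_measurable borel"
    and supp: "\<And>x. x \<notin> \<Omega> \<Longrightarrow> w x = 0"
    and diam: "\<And>x y. x \<in> \<Omega> \<Longrightarrow> y \<in> \<Omega> \<Longrightarrow> norm (y - x) < L"
    and b: "L \<le> norm b"
  shows "Dfun w b = 2 * (\<integral>\<^sup>+ x. ennreal ((w x)^2) \<partial>lborel)"
proof -
  let ?g = "\<lambda>x. ennreal ((w x)^2)"
  have "Dfun w b = (\<integral>\<^sup>+ x. ?g (b + x) + ?g x \<partial>lborel)"
    unfolding Dfun_def
  proof (rule nn_integral_cong)
    fix x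
    have "w (x + b) = 0 \<or> w x = 0"
    proof (rule ccontr)
      assume "\<not> ?thesis"
      then have "x + b \<in> \<Omega>" "x \<in> \<Omega>" using supp by auto
      from diam[OF this(2,1)] b show False by simp
    qed
    then show "ennreal ((w (x + b) - w x)^2) = ?g (b + x) + ?g x"
      by (auto simp: add.commute)
  qed
  also have "\<dots> = (\<integral>\<^sup>+ x. ?g (b + x) \<partial>lborel) + (\<integral>\<^sup>+ x. ?g x \<partial>lborel)"
    by (simp add: nn_integral_add)
  also have "(\<integral>\<^sup>+ x. ?g (b + x) \<partial>lborel) = (\<integral>\<^sup>+ x. ?g x \<partial>lborel)"
    by (rule nn_translate) simp
  finally show ?thesis by (simp add: mult_2)
qed

lemma D_lower:
  assumes [measurable]: "w \<in> borel_measurable borel"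
    and supp: "\<And>x. x \<notin> \<Omega> \<Longrightarrow> w x = 0"
    and diam: "\<And>x y. x \<in> \<Omega> \<Longrightarrow> y \<in> \<Omega> \<Longrightarrow> norm (y - x) < L"
    and L: "0 < L" and h: "norm h \<le> L"
  shows "ennreal ((norm h)^2 / (4 * L^2)) * (2 * (\<integral>\<^sup>+ x. ennreal ((w x)^2) \<partial>lborel)) \<le> Dfun w h"
proof (cases "h = 0")
  case True then show ?thesis by simp
next
  case False
  then have hp: "0 < norm h" by simp
  have ex: "\<exists>k. L \<le> 2^k * norm h"
  proof -
    obtain k where "L / norm h < 2^k" using real_arch_pow[of 2 "L / norm h"] by auto
    then have "L < 2^k * norm h" using hp by (simp add: field_simps)
    then show ?thesis by (auto intro: less_imp_le)
  qed
  define k where "k = (LEAST k. L \<le> 2^k * norm h)"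
  have k1: "L \<le> 2^k * norm h" unfolding k_def by (rule LeastI_ex[OF ex])
  have k2: "2^k * norm h \<le> 2 * L"
  proof (cases k)
    case 0 then show ?thesis using h L by simp
  next
    case (Suc m)
    have "\<not> L \<le> 2^m * norm h"
      using not_less_Least[of m "\<lambda>k. L \<le> 2^k * norm h"] Suc unfolding k_def by auto
    then show ?thesis using Suc by simp
  qed
  have far: "Dfun w ((2::real)^k *\<^sub>R h) = 2 * (\<integral>\<^sup>+ x. ennreal ((w x)^2) \<partial>lborel)"
  proof (rule D_far[OF assms(1) supp diam])
    have "norm ((2::real)^k *\<^sub>R h) = 2^k * norm h" by (simp only: norm_scaleR power_abs abs_numeral)
    then show "L \<le> norm ((2::real)^k *\<^sub>R h)" using k1 by linarith
  qed
  have c: "(norm h)^2 / (4 * L^2) * 4^k \<le> 1"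
  proof -
    have "(2^k * norm h)^2 \<le> (2 * L)^2"
      using k2 hp by (intro power_mono) auto
    have p4: "(4::real)^k = (2^k)^2"
    proof -
      have "(4::real)^k = (2^2)^k" by simp
      also have "\<dots> = (2^k)^2" by (simp only: power_mult[symmetric] mult.commute)
      finally show ?thesis .
    qed
    then have "4^k * (norm h)^2 \<le> 4 * L^2"
      using \<open>(2^k * norm h)^2 \<le> (2 * L)^2\<close> by (simp add: power_mult_distrib)
    then show ?thesis using L by (simp add: field_simps)
  qed
  have "ennreal ((norm h)^2 / (4 * L^2)) * (2 * (\<integral>\<^sup>+ x. ennreal ((w x)^2) \<partial>lborel))
      \<le> ennreal ((norm h)^2 / (4 * L^2)) * (4^k * Dfun w h)"
    unfolding far[symmetric] by (rule mult_left_mono[OF D_pow[OF assms(1)]]) simp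
  also have "\<dots> = ennreal ((norm h)^2 / (4 * L^2) * 4^k) * Dfun w h"
  proof -
    have "(4::ennreal)^k = ennreal (4^k)" using ennreal_power[of 4 k] by simp
    then show ?thesis
      by (simp add: ennreal_mult[symmetric] mult.assoc[symmetric] del: ennreal_numeral)
  qed
  also have "\<dots> \<le> 1 * Dfun w h"
    by (rule mult_right_mono) (use c in auto)
  finally show ?thesis by simp
qed


lemma nn_integral_2_le: "(\<integral>\<^sup>+x. 2 * f x \<partial>M) \<le> 2 * integral\<^sup>N M f"
  unfolding nn_integral_def
proof (rule SUP_least)
  fix g assume "g \<in> {g. simple_function M g \<and> g \<le> (\<lambda>x. 2 * f x)}"
  then have g: "simple_function M g" "\<And>x. g x \<le> 2 * f x" by (auto simp: le_fun_def)
  define g' where "g' x = ennreal (1/2) * g x" for x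
  have h2: "ennreal (1/2) * 2 = 1"
    using ennreal_mult[of "1/2" 2] by simp
  have sg': "simple_function M g'" unfolding g'_def using g(1) by simp
  have "g' \<le> f"
  proof (rule le_funI)
    fix x
    have "g' x \<le> ennreal (1/2) * (2 * f x)" unfolding g'_def by (rule mult_left_mono[OF g(2)]) simp
    also have "\<dots> = f x" by (simp only: mult.assoc[symmetric] h2 mult_1)
    finally show "g' x \<le> f x" .
  qed
  have "integral\<^sup>S M g = 2 * integral\<^sup>S M g'"
    unfolding g'_def simple_integral_mult[OF g(1)] by (metis h2 mult.assoc mult.commute mult_1)
  also have "\<dots> \<le> 2 * (SUP g \<in> {g. simple_function M g \<and> g \<le> f}. integral\<^sup>S M g)"
    by (rule mult_left_mono) (use sg' \<open>g' \<le> f\<close> in \<open>auto intro!: SUP_upper\<close>)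
  finally show "integral\<^sup>S M g \<le> 2 * (SUP g \<in> {g. simple_function M g \<and> g \<le> f}. integral\<^sup>S M g)" .
qed

lemma pw1:
  assumes "open \<Omega>" and gz: "\<And>t. t > \<delta> \<Longrightarrow> g \<delta> t = 0"
    and uz: "\<forall>x\<in>Omega_c \<Omega> \<delta>. u x = 0"
  shows "ennreal ((u y - u x)^2 * kern_trunc g \<delta> d x y) * indicator (Omega_hat \<Omega> \<delta>) y * indicator (Omega_hat \<Omega> \<delta>) x
    = ennreal ((indicator \<Omega> y * u y - indicator \<Omega> x * u x)^2 * (g \<delta> (norm (y - x)) * indicator {0..d} (norm (y - x))))"
proof -
  have dj: "\<Omega> \<inter> Omega_c \<Omega> \<delta> = {}" by (auto simp: Omega_c_def)
  have A: "Omega_hat \<Omega> \<delta> = \<Omega> \<union> Omega_c \<Omega> \<delta>" by (simp add: Omega_hat_def)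
  have k1: "g \<delta> (norm (y - x)) = 0" if "x \<in> \<Omega>" "y \<notin> Omega_hat \<Omega> \<delta>"
    using strict_dist[OF assms(1) that] gz by simp
  have k2: "g \<delta> (norm (y - x)) = 0" if "y \<in> \<Omega>" "x \<notin> Omega_hat \<Omega> \<delta>"
    using strict_dist[OF assms(1) that] gz by (simp add: norm_minus_commute)
  show ?thesis
    unfolding kern_trunc_def kern_def
    using dj k1 k2 uz unfolding A by (cases "x \<in> \<Omega>"; cases "y \<in> \<Omega>"; cases "x \<in> Omega_c \<Omega> \<delta>"; cases "y \<in> Omega_c \<Omega> \<delta>") auto
qed


lemma main_bound:
  fixes \<Omega> :: "pt set" and g :: "real \<Rightarrow> real \<Rightarrow> real" and x0 :: pt
  assumes op: "open \<Omega>" and dp: "0 < \<delta>" and dL: "\<delta> \<le> L" and Lp: "0 < L"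
    and gnn: "\<And>t. 0 \<le> t \<Longrightarrow> 0 \<le> g \<delta> t"
    and gz: "\<And>t. t > \<delta> \<Longrightarrow> g \<delta> t = 0"
    and diam: "\<And>x y. x \<in> \<Omega> \<Longrightarrow> y \<in> \<Omega> \<Longrightarrow> norm (y - x) < L"
    and lim: "1/2 < (LINT y:{y. norm (y - x0) \<le> d}|lebesgue. \<bar>y $ 1 - x0 $ 1\<bar>^2 * kern g \<delta> x0 y)"
    and uV: "u \<in> Vspace \<Omega> g \<delta>"
  shows "L2_norm_sq \<Omega> u \<le> ennreal (4 * L^2) * nl_norm_sq (kern_trunc g \<delta> d) (Omega_hat \<Omega> \<delta>) u"
proof -
  have umeas: "(\<lambda>x. indicator (Omega_hat \<Omega> \<delta>) x *\<^sub>R u x) \<in> borel_measurable lebesgue"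
    and uz: "\<forall>x\<in>Omega_c \<Omega> \<delta>. u x = 0"
    using uV by (auto simp: Vspace_def set_borel_measurable_def)
  define v where "v x = indicator \<Omega> x * u x" for x
  have Om: "\<Omega> \<in> sets lebesgue" using op by auto
  have "v = (\<lambda>x. indicator \<Omega> x * (indicator (Omega_hat \<Omega> \<delta>) x *\<^sub>R u x))"
    by (auto simp: v_def Omega_hat_def indicator_def fun_eq_iff)
  then have vmeas: "v \<in> borel_measurable lebesgue"
    using umeas Om by (simp add: borel_measurable_times borel_measurable_indicator)
  obtain w0 where w0: "w0 \<in> borel_measurable lborel" "AE x in lborel. v x = w0 x"
    using completion_ex_borel_measurable_real[OF vmeas] by blast
  define w where "w x = indicator \<Omega> x * w0 x" for x
  have wm[measurable]: "w \<in> borel_measurable borel"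
    using w0(1) op unfolding w_def by (simp add: borel_open)
  have vw: "AE x in lborel. v x = w x"
    using w0(2) by eventually_elim (auto simp: v_def w_def indicator_def)
  have supp: "\<And>x. x \<notin> \<Omega> \<Longrightarrow> w x = 0" by (simp add: w_def)
  define N where "N = (\<integral>\<^sup>+ x. ennreal ((w x)^2) \<partial>lborel)"
  have HL2: "L2_norm_sq \<Omega> u = N"
  proof -
    have "L2_norm_sq \<Omega> u = (\<integral>\<^sup>+ x. ennreal ((v x)^2) \<partial>lborel)"
      unfolding L2_norm_sq_def nn_integral_completion
      by (rule nn_integral_cong) (auto simp: v_def indicator_def)
    also have "\<dots> = N" unfolding N_def
      by (rule nn_integral_cong_AE) (use vw in auto)
    finally show ?thesis .
  qed

  define k where "k h = g \<delta> (norm h) * indicator {0..d} (norm h)" for h :: pt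
  have knn: "0 \<le> k h" for h unfolding k_def using gnn by simp
  define F where "F y = indicator {y. norm (y - x0) \<le> d} y *\<^sub>R (\<bar>y $ 1 - x0 $ 1\<bar>^2 * kern g \<delta> x0 y)" for y :: pt
  have Fnn: "0 \<le> F y" for y unfolding F_def kern_def using gnn by simp
  have Fk: "F (x0 + h) = (h $ 1)^2 * k h" for h
    unfolding F_def k_def kern_def by (simp add: indicator_def)
  have LF: "(LINT y|lebesgue. F y) > 1/2"
    using lim unfolding F_def set_lebesgue_integral_def by simp
  have Fint: "integrable lebesgue F"
    using LF not_integrable_integral_eq by fastforce
  obtain G where G: "G \<in> borel_measurable lborel" "AE x in lborel. F x = G x"
    using completion_ex_borel_measurable_real[OF borel_measurable_integrable[OF Fint]] by blast
  have Gm[measurable]: "G \<in> borel_measurable borel" using G(1) by simp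
  define K where "K h = indicator (cball 0 L) h * max 0 (G (x0 + h)) / (h $ 1)^2" for h :: pt
  have c1m[measurable]: "(\<lambda>h::pt. h $ 1) \<in> borel_measurable borel"
    by (intro borel_measurable_continuous_onI continuous_intros)
  have m1: "(\<lambda>h::pt. indicator (cball 0 L) h :: real) \<in> borel_measurable borel"
    by (intro borel_measurable_indicator borel_closed closed_cball)
  have mc: "(\<lambda>h::pt. x0 + h) \<in> borel \<rightarrow>\<^sub>M borel" by measurable
  have m2: "(\<lambda>h. G (x0 + h)) \<in> borel_measurable borel"
    using measurable_compose[OF mc Gm] by simp
  have Km[measurable]: "K \<in> borel_measurable borel" unfolding K_def
    by (intro borel_measurable_divide borel_measurable_times borel_measurable_max m1 m2
        borel_measurable_power c1m borel_measurable_const)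
  have Knn: "0 \<le> K h" for h unfolding K_def by simp
  have FG0: "AE h in lborel. F (x0 + h) = G (x0 + h)" by (rule AE_translate[OF G(2)])
  have Kk: "AE h in lborel. K h = k h"
    using FG0 AE_comp1_nz
  proof eventually_elim
    case (elim h)
    show ?case
    proof (cases "norm h \<le> L")
      case True
      have e: "G (x0 + h) = (h $ 1)^2 * k h" using elim Fk[of h] by simp
      have p: "0 \<le> (h $ 1)^2 * k h" using knn[of h] by simp
      have nz: "(h $ 1)^2 \<noteq> 0" using elim by simp
      show ?thesis using True e p nz by (simp add: K_def max_absorb2)
    next
      case False
      then have "g \<delta> (norm h) = 0" using gz dL by simp
      then show ?thesis using False by (simp add: K_def k_def)
    qed
  qed
  have Kmom: "ennreal (1/2) \<le> (\<integral>\<^sup>+ h. ennreal (K h * (norm h)^2) \<partial>lborel)"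
  proof -
    have "ennreal (1/2) \<le> ennreal (LINT y|lebesgue. F y)" using LF by (intro ennreal_leI) simp
    also have "\<dots> = (\<integral>\<^sup>+ y. ennreal (F y) \<partial>lebesgue)"
      by (rule nn_integral_eq_integral[symmetric]) (use Fint Fnn in auto)
    also have "\<dots> = (\<integral>\<^sup>+ y. ennreal (G y) \<partial>lborel)"
      unfolding nn_integral_completion by (rule nn_integral_cong_AE) (use G(2) in auto)
    also have "\<dots> = (\<integral>\<^sup>+ h. ennreal (G (x0 + h)) \<partial>lborel)"
      by (rule nn_translate[symmetric]) simp
    also have "\<dots> = (\<integral>\<^sup>+ h. ennreal (K h * (h $ 1)^2) \<partial>lborel)"
      by (rule nn_integral_cong_AE) (use FG0 Kk in \<open>eventually_elim, simp add: Fk mult.commute\<close>)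
    also have "\<dots> \<le> (\<integral>\<^sup>+ h. ennreal (K h * (norm h)^2) \<partial>lborel)"
    proof (rule nn_integral_mono)
      fix h :: pt
      have "(h $ 1)^2 \<le> (norm h)^2"
        using component_le_norm_cart[of h 1] by (metis abs_ge_zero power2_abs power_mono)
      then show "ennreal (K h * (h $ 1)^2) \<le> ennreal (K h * (norm h)^2)"
        by (intro ennreal_leI mult_left_mono Knn)
    qed
    finally show ?thesis .
  qed

  define A where "A = Omega_hat \<Omega> \<delta>"
  define E where "E = nl_norm_sq (kern_trunc g \<delta> d) A u"
  have e1: "E = (\<integral>\<^sup>+ x. (\<integral>\<^sup>+ y. ennreal ((v y - v x)^2 * k (y - x)) \<partial>lborel) \<partial>lborel)"
    unfolding E_def nl_norm_sq_def nn_integral_completion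
  proof (rule nn_integral_cong)
    fix x
    have "(\<integral>\<^sup>+ y. ennreal ((u y - u x)^2 * kern_trunc g \<delta> d x y) * indicator A y \<partial>lborel) * indicator A x
        = (\<integral>\<^sup>+ y. ennreal ((u y - u x)^2 * kern_trunc g \<delta> d x y) * indicator A y * indicator A x \<partial>lborel)"
      by (cases "x \<in> A") auto
    also have "\<dots> = (\<integral>\<^sup>+ y. ennreal ((v y - v x)^2 * k (y - x)) \<partial>lborel)"
      unfolding A_def v_def k_def by (rule nn_integral_cong) (rule pw1[where \<Omega>=\<Omega> and \<delta>=\<delta> and g=g and u=u, OF op gz uz])
    finally show "(\<integral>\<^sup>+ y. ennreal ((u y - u x)^2 * kern_trunc g \<delta> d x y) * indicator A y \<partial>lborel) * indicator A x
        = (\<integral>\<^sup>+ y. ennreal ((v y - v x)^2 * k (y - x)) \<partial>lborel)" .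
  qed
  also have e2: "\<dots> = (\<integral>\<^sup>+ x. (\<integral>\<^sup>+ y. ennreal ((w y - w x)^2 * K (y - x)) \<partial>lborel) \<partial>lborel)"
  proof (rule nn_integral_cong_AE)
    show "AE x in lborel. (\<integral>\<^sup>+ y. ennreal ((v y - v x)^2 * k (y - x)) \<partial>lborel)
       = (\<integral>\<^sup>+ y. ennreal ((w y - w x)^2 * K (y - x)) \<partial>lborel)"
      using vw
    proof eventually_elim
      case (elim x)
      have "AE y in lborel. K (- x + y) = k (- x + y)" by (rule AE_translate[OF Kk])
      then have ae2: "AE y in lborel. K (y - x) = k (y - x)" by (simp add: add.commute)
      have vx: "v x = w x" using elim by simp
      have "AE y in lborel. ennreal ((v y - v x)^2 * k (y - x)) = ennreal ((w y - w x)^2 * K (y - x))"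
        using vw ae2 by eventually_elim (simp add: vx)
      then show ?case by (rule nn_integral_cong_AE)
    qed
  qed
  also have e3: "\<dots> = (\<integral>\<^sup>+ x. (\<integral>\<^sup>+ h. ennreal ((w (x + h) - w x)^2 * K h) \<partial>lborel) \<partial>lborel)"
  proof (rule nn_integral_cong)
    fix x
    show "(\<integral>\<^sup>+ y. ennreal ((w y - w x)^2 * K (y - x)) \<partial>lborel)
       = (\<integral>\<^sup>+ h. ennreal ((w (x + h) - w x)^2 * K h) \<partial>lborel)"
      using nn_translate[of "\<lambda>y. ennreal ((w y - w x)^2 * K (y - x))" x] by simp
  qed
  also have e4: "\<dots> = (\<integral>\<^sup>+ h. (\<integral>\<^sup>+ x. ennreal ((w (x + h) - w x)^2 * K h) \<partial>lborel) \<partial>lborel)"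
  proof (rule lborel_pair.Fubini'[symmetric])
    have ms: "(\<lambda>p::pt\<times>pt. fst p + snd p) \<in> borel_measurable borel"
      by (intro borel_measurable_continuous_onI continuous_intros)
    have mf: "(\<lambda>p::pt\<times>pt. fst p) \<in> borel_measurable borel"
      by (intro borel_measurable_continuous_onI continuous_intros)
    have ms2: "(\<lambda>p::pt\<times>pt. snd p) \<in> borel_measurable borel"
      by (intro borel_measurable_continuous_onI continuous_intros)
    have a1: "(\<lambda>p::pt\<times>pt. w (fst p + snd p)) \<in> borel_measurable borel"
      using measurable_compose[OF ms wm] by simp
    have a2: "(\<lambda>p::pt\<times>pt. w (fst p)) \<in> borel_measurable borel"
      using measurable_compose[OF mf wm] by simp
    have a3: "(\<lambda>p::pt\<times>pt. K (snd p)) \<in> borel_measurable borel"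
      using measurable_compose[OF ms2 Km] by simp
    have "(\<lambda>p::pt\<times>pt. (w (fst p + snd p) - w (fst p))^2 * K (snd p)) \<in> borel_measurable borel"
      by (intro borel_measurable_times borel_measurable_power borel_measurable_diff a1 a2 a3)
    from measurable_compose[OF this measurable_ennreal]
    have mm: "(\<lambda>p::pt\<times>pt. ennreal ((w (fst p + snd p) - w (fst p))^2 * K (snd p))) \<in> borel_measurable borel"
      by (simp add: o_def)
    have eq: "(\<lambda>(x, h). ennreal ((w (x + h) - w x)^2 * K h)) = (\<lambda>p::pt\<times>pt. ennreal ((w (fst p + snd p) - w (fst p))^2 * K (snd p)))"
      by (simp add: fun_eq_iff split_beta)
    show "(\<lambda>(x, h). ennreal ((w (x + h) - w x)^2 * K h)) \<in> borel_measurable (lborel \<Otimes>\<^sub>M lborel)"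
      unfolding eq lborel_prod measurable_lborel2 by (rule mm)
  qed
  also have e5: "\<dots> = (\<integral>\<^sup>+ h. ennreal (K h) * Dfun w h \<partial>lborel)"
  proof (rule nn_integral_cong)
    fix h
    have "(\<integral>\<^sup>+ x. ennreal ((w (x + h) - w x)^2 * K h) \<partial>lborel)
        = (\<integral>\<^sup>+ x. ennreal (K h) * ennreal ((w (x + h) - w x)^2) \<partial>lborel)"
      by (rule nn_integral_cong) (simp add: ennreal_mult'' Knn mult.commute)
    also have "\<dots> = ennreal (K h) * Dfun w h"
      unfolding Dfun_def by (rule nn_integral_cmult) simp
    finally show "(\<integral>\<^sup>+ x. ennreal ((w (x + h) - w x)^2 * K h) \<partial>lborel) = ennreal (K h) * Dfun w h" .
  qed
  finally have Eeq: "E = (\<integral>\<^sup>+ h. ennreal (K h) * Dfun w h \<partial>lborel)" .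
  have e6: "(\<integral>\<^sup>+ h. ennreal (K h * (norm h)^2) * (ennreal (1 / (4 * L^2)) * (2 * N)) \<partial>lborel) \<le> (\<integral>\<^sup>+ h. ennreal (K h) * Dfun w h \<partial>lborel)"
  proof (rule nn_integral_mono)
    fix h :: pt
    show "ennreal (K h * (norm h)^2) * (ennreal (1 / (4 * L^2)) * (2 * N)) \<le> ennreal (K h) * Dfun w h"
    proof (cases "norm h \<le> L")
      case True
      have "ennreal (K h * (norm h)^2) * (ennreal (1 / (4 * L^2)) * (2 * N))
          = ennreal (K h) * (ennreal ((norm h)^2 / (4 * L^2)) * (2 * N))"
      proof -
        have a: "ennreal (K h * (norm h)^2) = ennreal (K h) * ennreal ((norm h)^2)"
          using Knn[of h] by (simp add: ennreal_mult)
        have b: "ennreal ((norm h)^2) * ennreal (1 / (4 * L^2)) = ennreal ((norm h)^2 / (4 * L^2))"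
          by (subst ennreal_mult[symmetric]) auto
        show ?thesis by (simp only: a b[symmetric] mult.assoc)
      qed
      also have "\<dots> \<le> ennreal (K h) * Dfun w h"
        unfolding N_def by (rule mult_left_mono[OF D_lower[where \<Omega>=\<Omega>, OF wm supp diam Lp True]]) auto
      finally show ?thesis .
    next
      case False then show ?thesis by (simp add: K_def)
    qed
  qed
  have "(\<integral>\<^sup>+ h. ennreal (K h * (norm h)^2) * (ennreal (1 / (4 * L^2)) * (2 * N)) \<partial>lborel) \<le> E"
    using e6 Eeq by simp
  moreover have "(\<integral>\<^sup>+ h. ennreal (K h * (norm h)^2) * (ennreal (1 / (4 * L^2)) * (2 * N)) \<partial>lborel)
      = (\<integral>\<^sup>+ h. ennreal (K h * (norm h)^2) \<partial>lborel) * (ennreal (1 / (4 * L^2)) * (2 * N))"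
    by (rule nn_integral_multc) simp
  ultimately have "ennreal (1/2) * (ennreal (1 / (4 * L^2)) * (2 * N)) \<le> E"
    using Kmom by (metis (no_types, lifting) mult_right_mono order_trans zero_le)
  moreover have h2: "ennreal (1/2) * 2 = 1"
    using ennreal_mult[of "1/2" 2] by simp
  ultimately have lb: "ennreal (1 / (4 * L^2)) * N \<le> E"
    by (metis (no_types, lifting) mult.assoc mult.left_commute mult_1)
  have "N = ennreal (4 * L^2) * (ennreal (1 / (4 * L^2)) * N)"
    using Lp by (simp add: mult.assoc[symmetric] ennreal_mult[symmetric])
  also have "\<dots> \<le> ennreal (4 * L^2) * E" by (rule mult_left_mono[OF lb]) simp
  finally show ?thesis using HL2 unfolding E_def A_def by simp
qed


lemma pw2:
  fixes \<Omega> :: "pt set"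
  assumes dp: "0 < \<delta>" and gnn: "\<And>t. 0 \<le> t \<Longrightarrow> 0 \<le> g \<delta> t"
    and Pp: "\<And>x. polygon (P \<delta> x) \<and> P \<delta> x \<subseteq> cball x \<delta>"
    and uz: "\<forall>x\<in>Omega_c \<Omega> \<delta>. u x = 0"
    and xA: "x \<in> Omega_hat \<Omega> \<delta>" and yA: "y \<in> Omega_hat \<Omega> \<delta>"
  shows "(u y - u x)^2 * kern_trunc g \<delta> (r_low \<Omega> P \<delta>) x y \<le> 2 * ((u y - u x)^2 * kern_poly g P \<delta> x y)"
proof -
  define D where "D = (u y - u x)^2"
  define a where "a = g \<delta> (norm (y - x)) * indicator (P \<delta> x) y"
  define b where "b = g \<delta> (norm (x - y)) * indicator (P \<delta> y) x"
  define kt where "kt = g \<delta> (norm (y - x)) * indicator {0..r_low \<Omega> P \<delta>} (norm (y - x))"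
  have D0: "0 \<le> D" unfolding D_def by simp
  have a0: "0 \<le> a" "0 \<le> b" unfolding a_def b_def using gnn by auto
  have kp: "kern_poly g P \<delta> x y = (a + b) / 2" by (simp add: kern_poly_def kern_def a_def b_def)
  have kt: "kern_trunc g \<delta> (r_low \<Omega> P \<delta>) x y = kt" by (simp add: kern_trunc_def kern_def kt_def)
  have PP: "\<And>z. z \<in> \<Omega> \<Longrightarrow> P \<delta> z \<subseteq> cball z \<delta>" using Pp by blast
  have main: "kt \<le> a + b \<or> D = 0"
  proof (cases "y = x")
    case True then show ?thesis by (simp add: D_def)
  next
    case False
    then have np: "0 < norm (y - x)" by simp
    show ?thesis
    proof (cases "x \<in> \<Omega>")
      case True
      show ?thesis
      proof (cases "norm (y - x) \<le> r_low \<Omega> P \<delta>")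
        case le: True
        have "y \<in> P \<delta> x"
          by (rule inball_sub[OF _ polygon_closed np]) (use Pp le r_low_le[where P=P and \<delta>=\<delta> and \<Omega>=\<Omega>, OF PP True] in auto)
        then show ?thesis using a0 by (simp add: a_def kt_def indicator_def)
      next
        case False
        then show ?thesis using a0 by (simp add: kt_def indicator_def)
      qed
    next
      case xn: False
      show ?thesis
      proof (cases "y \<in> \<Omega>")
        case True
        show ?thesis
        proof (cases "norm (y - x) \<le> r_low \<Omega> P \<delta>")
          case le: True
          have np': "0 < norm (x - y)" using np by (simp add: norm_minus_commute)
          have "x \<in> P \<delta> y"
            by (rule inball_sub[OF _ polygon_closed np']) (use Pp le r_low_le[where P=P and \<delta>=\<delta> and \<Omega>=\<Omega>, OF PP True] in \<open>auto simp: norm_minus_commute\<close>)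
          then show ?thesis using a0 by (simp add: b_def kt_def indicator_def norm_minus_commute)
        next
          case False
          then show ?thesis using a0 by (simp add: kt_def indicator_def)
        qed
      next
        case False
        then have "x \<in> Omega_c \<Omega> \<delta>" "y \<in> Omega_c \<Omega> \<delta>" using xn xA yA by (auto simp: Omega_hat_def)
        then show ?thesis using uz by (simp add: D_def)
      qed
    qed
  qed
  have "D * kt \<le> 2 * (D * ((a + b) / 2))"
    using main D0 by (auto intro: mult_left_mono)
  then show ?thesis unfolding kp kt D_def .
qed

lemma E_poly:
  fixes \<Omega> :: "pt set"
  assumes dp: "0 < \<delta>" and gnn: "\<And>t. 0 \<le> t \<Longrightarrow> 0 \<le> g \<delta> t"
    and Pp: "\<And>x. polygon (P \<delta> x) \<and> P \<delta> x \<subseteq> cball x \<delta>"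
    and uz: "\<forall>x\<in>Omega_c \<Omega> \<delta>. u x = 0"
  shows "nl_norm_sq (kern_trunc g \<delta> (r_low \<Omega> P \<delta>)) (Omega_hat \<Omega> \<delta>) u
     \<le> 2 * nl_norm_sq (kern_poly g P \<delta>) (Omega_hat \<Omega> \<delta>) u"
proof -
  let ?A = "Omega_hat \<Omega> \<delta>"
  let ?ft = "\<lambda>x y. ennreal ((u y - u x)^2 * kern_trunc g \<delta> (r_low \<Omega> P \<delta>) x y)"
  let ?fp = "\<lambda>x y. ennreal ((u y - u x)^2 * kern_poly g P \<delta> x y)"
  have "nl_norm_sq (kern_trunc g \<delta> (r_low \<Omega> P \<delta>)) ?A u
      \<le> (\<integral>\<^sup>+ x. 2 * ((\<integral>\<^sup>+ y. ?fp x y * indicator ?A y \<partial>lebesgue) * indicator ?A x) \<partial>lebesgue)"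
    unfolding nl_norm_sq_def
  proof (rule nn_integral_mono)
    fix x
    show "(\<integral>\<^sup>+ y. ?ft x y * indicator ?A y \<partial>lebesgue) * indicator ?A x
        \<le> 2 * ((\<integral>\<^sup>+ y. ?fp x y * indicator ?A y \<partial>lebesgue) * indicator ?A x)"
    proof (cases "x \<in> ?A")
      case True
      have "(\<integral>\<^sup>+ y. ?ft x y * indicator ?A y \<partial>lebesgue) \<le> (\<integral>\<^sup>+ y. 2 * (?fp x y * indicator ?A y) \<partial>lebesgue)"
      proof (rule nn_integral_mono)
        fix y
        show "?ft x y * indicator ?A y \<le> 2 * (?fp x y * indicator ?A y)"
        proof (cases "y \<in> ?A")
          case yA: True
          have "?ft x y \<le> ennreal (2 * ((u y - u x)^2 * kern_poly g P \<delta> x y))"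
            by (rule ennreal_leI, rule pw2[where g=g and \<delta>=\<delta> and P=P and \<Omega>=\<Omega> and u=u, OF dp gnn Pp uz True yA])
          also have "\<dots> = 2 * ?fp x y" by (simp add: ennreal_mult')
          finally show ?thesis using yA by simp
        qed simp
      qed
      also have "\<dots> \<le> 2 * (\<integral>\<^sup>+ y. ?fp x y * indicator ?A y \<partial>lebesgue)" by (rule nn_integral_2_le)
      finally show ?thesis using True by simp
    qed simp
  qed
  also have "\<dots> \<le> 2 * nl_norm_sq (kern_poly g P \<delta>) ?A u"
    unfolding nl_norm_sq_def by (rule nn_integral_2_le)
  finally show ?thesis .
qed


theorem lemma3p5:
  fixes \<Omega> :: "pt set"
    and g :: "real \<Rightarrow> real \<Rightarrow> real"
    and P :: "real \<Rightarrow> pt \<Rightarrow> pt set"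
  assumes "open \<Omega>" and "bounded \<Omega>"
    and g_nonneg: "\<And>\<delta> t. 0 < \<delta> \<Longrightarrow> 0 \<le> t \<Longrightarrow> 0 \<le> g \<delta> t"
    and g_pos: "\<And>\<delta> t. 0 < \<delta> \<Longrightarrow> 0 \<le> t \<Longrightarrow> t < \<delta> \<Longrightarrow> 0 < g \<delta> t"
    and g_zero: "\<And>\<delta> t. 0 < \<delta> \<Longrightarrow> t > \<delta> \<Longrightarrow> g \<delta> t = 0"
    and g_moment: "\<And>\<delta> i. 0 < \<delta> \<Longrightarrow>
         (LINT z:cball (0::pt) \<delta>|lebesgue. (z $ (i::2))^2 * g \<delta> (norm z)) = 1"
    and P_poly: "\<And>\<delta> x. 0 < \<delta> \<Longrightarrow> polygon (P \<delta> x) \<and> P \<delta> x \<subseteq> cball x \<delta>"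
    and lim: "\<And>x i. x \<in> \<Omega> \<Longrightarrow>
         ((\<lambda>\<delta>. LINT y:{y. norm (y - x) \<le> r_low \<Omega> P \<delta>}|lebesgue.
               \<bar>y $ i - x $ i\<bar>^2 * kern g \<delta> x y) \<longlongrightarrow> 1) (at_right 0)"
  shows "\<exists>\<delta>0>0. \<exists>C>0. \<forall>\<delta>. 0 < \<delta> \<and> \<delta> < \<delta>0 \<longrightarrow>
           (\<forall>u\<in>Vspace \<Omega> g \<delta>.
              L2_norm_sq \<Omega> u \<le> ennreal (C^2) *
                 nl_norm_sq (kern_trunc g \<delta> (r_low \<Omega> P \<delta>)) (Omega_hat \<Omega> \<delta>) u
            \<and> L2_norm_sq \<Omega> u \<le> ennreal (C^2) *
                 nl_norm_sq (kern_poly g P \<delta>) (Omega_hat \<Omega> \<delta>) u)"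
proof (cases "\<Omega> = {}")
  case True
  then have z: "\<And>u. L2_norm_sq \<Omega> u = 0" by (simp add: L2_norm_sq_def)
  have "(0::real) < 1 \<and> ((0::real) < 1 \<and> (\<forall>\<delta>. 0 < \<delta> \<and> \<delta> < 1 \<longrightarrow>
           (\<forall>u\<in>Vspace \<Omega> g \<delta>.
              L2_norm_sq \<Omega> u \<le> ennreal (1^2) *
                 nl_norm_sq (kern_trunc g \<delta> (r_low \<Omega> P \<delta>)) (Omega_hat \<Omega> \<delta>) u
            \<and> L2_norm_sq \<Omega> u \<le> ennreal (1^2) *
                 nl_norm_sq (kern_poly g P \<delta>) (Omega_hat \<Omega> \<delta>) u)))"
    by (simp add: z)
  then show ?thesis by blast
next
  case False
  then obtain x0 where x0: "x0 \<in> \<Omega>" by blast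
  obtain R where R: "0 < R" "\<And>x. x \<in> \<Omega> \<Longrightarrow> norm x \<le> R"
    using \<open>bounded \<Omega>\<close> by (auto simp: bounded_pos)
  define L where "L = 2 * R + 1"
  have Lp: "0 < L" using R by (simp add: L_def)
  have diam: "norm (y - x) < L" if "x \<in> \<Omega>" "y \<in> \<Omega>" for x y
  proof -
    have "norm (y - x) \<le> norm y + norm x" by (rule norm_triangle_ineq4)
    also have "\<dots> \<le> 2 * R" using R(2)[OF that(1)] R(2)[OF that(2)] by simp
    finally show ?thesis by (simp add: L_def)
  qed
  have "\<forall>\<^sub>F \<delta> in at_right 0. 1/2 < (LINT y:{y. norm (y - x0) \<le> r_low \<Omega> P \<delta>}|lebesgue.
               \<bar>y $ 1 - x0 $ 1\<bar>^2 * kern g \<delta> x0 y)"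
    by (rule order_tendstoD(1)[OF lim[OF x0]]) simp
  then obtain b where b: "0 < b" and bH: "\<And>\<delta>. 0 < \<delta> \<Longrightarrow> \<delta> < b \<Longrightarrow>
      1/2 < (LINT y:{y. norm (y - x0) \<le> r_low \<Omega> P \<delta>}|lebesgue. \<bar>y $ 1 - x0 $ 1\<bar>^2 * kern g \<delta> x0 y)"
    unfolding eventually_at_right_field by auto
  have key: "L2_norm_sq \<Omega> u \<le> ennreal ((3 * L)^2) *
                 nl_norm_sq (kern_trunc g \<delta> (r_low \<Omega> P \<delta>)) (Omega_hat \<Omega> \<delta>) u
            \<and> L2_norm_sq \<Omega> u \<le> ennreal ((3 * L)^2) *
                 nl_norm_sq (kern_poly g P \<delta>) (Omega_hat \<Omega> \<delta>) u"
    if dp: "0 < \<delta>" and dl: "\<delta> < min b L" and uV: "u \<in> Vspace \<Omega> g \<delta>" for \<delta> u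
  proof -
    have gnn: "\<And>t. 0 \<le> t \<Longrightarrow> 0 \<le> g \<delta> t" using g_nonneg[OF dp] .
    have gz: "\<And>t. t > \<delta> \<Longrightarrow> g \<delta> t = 0" using g_zero[OF dp] .
    have Pp: "\<And>x. polygon (P \<delta> x) \<and> P \<delta> x \<subseteq> cball x \<delta>" using P_poly[OF dp] .
    have uz: "\<forall>x\<in>Omega_c \<Omega> \<delta>. u x = 0" using uV by (simp add: Vspace_def)
    have dL: "\<delta> \<le> L" using dl by simp
    have lim1: "1/2 < (LINT y:{y. norm (y - x0) \<le> r_low \<Omega> P \<delta>}|lebesgue. \<bar>y $ 1 - x0 $ 1\<bar>^2 * kern g \<delta> x0 y)"
      using bH[OF dp] dl by simp
    define T where "T = nl_norm_sq (kern_trunc g \<delta> (r_low \<Omega> P \<delta>)) (Omega_hat \<Omega> \<delta>) u"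
    define Q where "Q = nl_norm_sq (kern_poly g P \<delta>) (Omega_hat \<Omega> \<delta>) u"
    have mb: "L2_norm_sq \<Omega> u \<le> ennreal (4 * L^2) * T"
      unfolding T_def by (rule main_bound[where g=g and \<delta>=\<delta> and \<Omega>=\<Omega>, OF \<open>open \<Omega>\<close> dp dL Lp gnn gz diam lim1 uV])
    have ep: "T \<le> 2 * Q" unfolding T_def Q_def by (rule E_poly[where g=g and \<delta>=\<delta> and P=P and \<Omega>=\<Omega> and u=u, OF dp gnn Pp uz])
    have c1: "ennreal (4 * L^2) \<le> ennreal ((3 * L)^2)"
      by (rule ennreal_leI) (simp add: power_mult_distrib)
    have c2: "ennreal (4 * L^2) * 2 \<le> ennreal ((3 * L)^2)"
    proof -
      have "ennreal (4 * L^2) * 2 = ennreal (8 * L^2)"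
        using ennreal_mult[of "4 * L^2" 2] by simp
      also have "\<dots> \<le> ennreal ((3 * L)^2)"
        by (rule ennreal_leI) (simp add: power_mult_distrib)
      finally show ?thesis .
    qed
    have "L2_norm_sq \<Omega> u \<le> ennreal ((3 * L)^2) * T"
      using mb mult_right_mono[OF c1, of T] by simp
    moreover have "L2_norm_sq \<Omega> u \<le> ennreal ((3 * L)^2) * Q"
    proof -
      have "ennreal (4 * L^2) * T \<le> ennreal (4 * L^2) * (2 * Q)"
        by (rule mult_left_mono[OF ep]) simp
      also have "\<dots> = (ennreal (4 * L^2) * 2) * Q" by (simp add: mult.assoc)
      also have "\<dots> \<le> ennreal ((3 * L)^2) * Q" by (rule mult_right_mono[OF c2]) simp
      finally show ?thesis using mb by simp
    qed
    ultimately show ?thesis unfolding T_def Q_def by simp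
  qed
  have "0 < min b L \<and> (0 < 3 * L \<and> (\<forall>\<delta>. 0 < \<delta> \<and> \<delta> < min b L \<longrightarrow>
           (\<forall>u\<in>Vspace \<Omega> g \<delta>.
              L2_norm_sq \<Omega> u \<le> ennreal ((3 * L)^2) *
                 nl_norm_sq (kern_trunc g \<delta> (r_low \<Omega> P \<delta>)) (Omega_hat \<Omega> \<delta>) u
            \<and> L2_norm_sq \<Omega> u \<le> ennreal ((3 * L)^2) *
                 nl_norm_sq (kern_poly g P \<delta>) (Omega_hat \<Omega> \<delta>) u)))"
    using b Lp key by auto
  then show ?thesis by blast
qed

end
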